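(* Let $X$ be a space with $|X|<\mathfrak{b}$. (a) If $X$ is absolutely strongly star-Lindelöf, then $X$ is selectively strongly star-Hurewicz. (b) If $X$ is absolutely Star-$\sigma$-cd, then $X$ satisfies $selSS^*_{cd}(\mathcal{O},\Gamma)$: for every sequence $(\mathcal{U}_n:n\in\omega)$ of open covers and every sequence $(D_n:n\in\omega)$ of dense subsets there are sets $C_n\subseteq D_n$, closed and discrete in $X$, such that every $x\in X$ lies in $St(C_n,\mathcal{U}_n)$ for all but finitely many $n$.
   Context: All spaces are regular. $St(A,\mathcal{U})=\bigcup\{U\in\mathcal{U}:U\cap A\neq\emptyset\}$. $\mathfrak{b}$ is the bounding number. $X$ is absolutely strongly star-Lindelöf if for every open cover $\mathcal{U}$ and every dense $D\subseteq X$ there is a countable $C\subseteq D$ with $St(C,\mathcal{U})=X$. $X$ is selectively strongly star-Hurewicz if for every sequence $(\mathcal{U}_n)$ of open covers and every sequence $(D_n)$ of dense subsets there are finite $F_n\subseteq D_n$ such that every $x\in X$ lies in $St(F_n,\mathcal{U}_n)$ for all but finitely many $n$. $X$ is absolutely Star-$\sigma$-cd if for every dense $D\subseteq X$ and every open cover $\mathcal{U}$ there is $K\subseteq D$ which is a countable union of closed discrete subsets of $X$ with $St(K,\mathcal{U})=X$. *)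

theory Defs
  imports "HOL-Analysis.Analysis"
begin

definition star :: "'a set \<Rightarrow> 'a set set \<Rightarrow> 'a set" where
  "star A \<U> = \<Union>{U \<in> \<U>. U \<inter> A \<noteq> {}}"

definition open_cover :: "'a topology \<Rightarrow> 'a set set \<Rightarrow> bool" where
  "open_cover X \<U> \<longleftrightarrow> (\<forall>U\<in>\<U>. openin X U) \<and> \<Union>\<U> = topspace X"

definition dense_in :: "'a topology \<Rightarrow> 'a set \<Rightarrow> bool" where
  "dense_in X D \<longleftrightarrow> D \<subseteq> topspace X \<and> X closure_of D = topspace X"

definition closed_discrete :: "'a topology \<Rightarrow> 'a set \<Rightarrow> bool" where
  "closed_discrete X C \<longleftrightarrow> C \<subseteq> topspace X \<and> closedin X C \<and>
     subtopology X C = discrete_topology C"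

text \<open>Eventual domination bounded family in nat^nat; the bounding number b is the least
 cardinality of an unbounded family. |A| < b iff |A| < |F| for every unbounded F.\<close>
definition eventually_bounded :: "(nat \<Rightarrow> nat) set \<Rightarrow> bool" where
  "eventually_bounded F \<longleftrightarrow> (\<exists>g. \<forall>f\<in>F. \<forall>\<^sub>F n in sequentially. f n \<le> g n)"

definition card_less_bounding :: "'a set \<Rightarrow> bool" where
  "card_less_bounding A \<longleftrightarrow>
     (\<forall>F :: (nat \<Rightarrow> nat) set. \<not> eventually_bounded F \<longrightarrow> ordLess2 (card_of A) (card_of F))"

definition abs_strongly_star_Lindelof :: "'a topology \<Rightarrow> bool" where
  "abs_strongly_star_Lindelof X \<longleftrightarrow>
     (\<forall>\<U> D. open_cover X \<U> \<and> dense_in X D \<longrightarrow>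
        (\<exists>C. C \<subseteq> D \<and> countable C \<and> star C \<U> = topspace X))"

definition sel_strongly_star_Hurewicz :: "'a topology \<Rightarrow> bool" where
  "sel_strongly_star_Hurewicz X \<longleftrightarrow>
     (\<forall>\<U> :: nat \<Rightarrow> 'a set set. \<forall>D :: nat \<Rightarrow> 'a set.
        (\<forall>n. open_cover X (\<U> n) \<and> dense_in X (D n)) \<longrightarrow>
        (\<exists>F :: nat \<Rightarrow> 'a set. (\<forall>n. finite (F n) \<and> F n \<subseteq> D n) \<and>
           (\<forall>x\<in>topspace X. \<forall>\<^sub>F n in sequentially. x \<in> star (F n) (\<U> n))))"

definition abs_star_sigma_cd :: "'a topology \<Rightarrow> bool" where
  "abs_star_sigma_cd X \<longleftrightarrow>
     (\<forall>\<U> D. open_cover X \<U> \<and> dense_in X D \<longrightarrow>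
        (\<exists>K. K \<subseteq> D \<and> (\<exists>C :: nat \<Rightarrow> 'a set. (\<forall>k. closed_discrete X (C k)) \<and> K = (\<Union>k. C k))
             \<and> star K \<U> = topspace X))"

definition selSS_cd_O_Gamma :: "'a topology \<Rightarrow> bool" where
  "selSS_cd_O_Gamma X \<longleftrightarrow>
     (\<forall>\<U> :: nat \<Rightarrow> 'a set set. \<forall>D :: nat \<Rightarrow> 'a set.
        (\<forall>n. open_cover X (\<U> n) \<and> dense_in X (D n)) \<longrightarrow>
        (\<exists>C :: nat \<Rightarrow> 'a set. (\<forall>n. C n \<subseteq> D n \<and> closed_discrete X (C n)) \<and>
           (\<forall>x\<in>topspace X. \<forall>\<^sub>F n in sequentially. x \<in> star (C n) (\<U> n))))"

end

theory Submission
  imports Defs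
begin

lemma bounded_choice:
  fixes P :: "nat \<Rightarrow> nat \<Rightarrow> 'a \<Rightarrow> bool"
  assumes cb: "card_less_bounding S"
    and ex: "\<And>n x. x \<in> S \<Longrightarrow> \<exists>k. P n k x"
    and mono: "\<And>n x k k'. P n k x \<Longrightarrow> k \<le> k' \<Longrightarrow> P n k' x"
  shows "\<exists>g. \<forall>x\<in>S. \<forall>\<^sub>F n in sequentially. P n (g n) x"
proof -
  define f where "f x = (\<lambda>n. LEAST k. P n k x)" for x
  have "eventually_bounded (f ` S)"
  proof (rule ccontr)
    assume "\<not> eventually_bounded (f ` S)"
    then have "ordLess2 (card_of S) (card_of (f ` S))" using cb unfolding card_less_bounding_def by blast
    moreover have "ordLeq2 (card_of (f ` S)) (card_of S)" by (rule card_of_image)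
    ultimately show False using not_ordLess_ordLeq by blast
  qed
  then obtain g where g: "\<forall>h\<in>f ` S. \<forall>\<^sub>F n in sequentially. h n \<le> g n"
    unfolding eventually_bounded_def by blast
  have "\<forall>x\<in>S. \<forall>\<^sub>F n in sequentially. P n (g n) x"
  proof
    fix x assume x: "x \<in> S"
    have "\<forall>\<^sub>F n in sequentially. f x n \<le> g n" using g x by blast
    then show "\<forall>\<^sub>F n in sequentially. P n (g n) x"
    proof (rule eventually_mono)
      fix n assume "f x n \<le> g n"
      moreover have "P n (f x n) x" unfolding f_def using ex[OF x] by (rule LeastI_ex)
      ultimately show "P n (g n) x" using mono by blast
    qed
  qed
  then show ?thesis by blast
qed

lemma star_mono: "A \<subseteq> B \<Longrightarrow> star A U \<subseteq> star B U"
  unfolding star_def by blast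

lemma closed_discrete_iff:
  "closed_discrete X C \<longleftrightarrow> C \<subseteq> topspace X \<and> X derived_set_of C = {}"
  unfolding closed_discrete_def subtopology_eq_discrete_topology_eq closedin_contains_derived_set
  by blast

lemma partA:
  fixes X :: "'a topology"
  assumes cb: "card_less_bounding (topspace X)" and A: "abs_strongly_star_Lindelof X"
  shows "sel_strongly_star_Hurewicz X"
  unfolding sel_strongly_star_Hurewicz_def
proof (intro allI impI)
  fix U :: "nat \<Rightarrow> 'a set set" and D
  assume h: "\<forall>n. open_cover X (U n) \<and> dense_in X (D n)"
  show "\<exists>F. (\<forall>n. finite (F n) \<and> F n \<subseteq> D n) \<and>
           (\<forall>x\<in>topspace X. \<forall>\<^sub>F n in sequentially. x \<in> star (F n) (U n))"
  proof (cases "topspace X = {}")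
    case True then show ?thesis by (intro exI[of _ "\<lambda>n. {}"]) auto
  next
    case ne: False
    have "\<forall>n. \<exists>C. C \<subseteq> D n \<and> countable C \<and> star C (U n) = topspace X"
    proof
      fix n
      have "open_cover X (U n) \<and> dense_in X (D n)" using h by blast
      then show "\<exists>C. C \<subseteq> D n \<and> countable C \<and> star C (U n) = topspace X"
        using A[unfolded abs_strongly_star_Lindelof_def, rule_format, of "U n" "D n"] by blast
    qed
    from choice[OF this] obtain C where C0: "\<forall>n. C n \<subseteq> D n \<and> countable (C n) \<and> star (C n) (U n) = topspace X"
      by (rule exE)
    have C: "C n \<subseteq> D n \<and> countable (C n) \<and> star (C n) (U n) = topspace X" for n
      using C0 by (rule spec)
    have Cne: "C n \<noteq> {}" for n
    proof
      assume "C n = {}"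
      then have "star (C n) (U n) = {}" unfolding star_def by auto
      then show False using C[of n] ne by simp
    qed
    define P where "P n k x = (x \<in> star (from_nat_into (C n) ` {..k}) (U n))" for n k x
    have "\<exists>g. \<forall>x\<in>topspace X. \<forall>\<^sub>F n in sequentially. P n (g n) x"
    proof (rule bounded_choice[OF cb])
      fix n x assume x: "x \<in> topspace X"
      have "star (C n) (U n) = topspace X" using C[of n] by blast
      with x have "x \<in> star (C n) (U n)" by simp
      then obtain V c where V: "V \<in> U n" "x \<in> V" "c \<in> V" "c \<in> C n" unfolding star_def by auto
      let ?k = "to_nat_on (C n) c"
      have "countable (C n)" using C[of n] by blast
      then have "from_nat_into (C n) ?k = c" using V(4) by (rule from_nat_into_to_nat_on)
      then have "c \<in> from_nat_into (C n) ` {..?k}" by (metis atMost_iff image_eqI order_refl)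
      then have "V \<inter> from_nat_into (C n) ` {..?k} \<noteq> {}" using V(3) by auto
      then have "x \<in> star (from_nat_into (C n) ` {..?k}) (U n)"
        unfolding star_def using V(1,2) by auto
      then show "\<exists>k. P n k x" unfolding P_def by (rule exI)
    next
      fix n x k k' assume "P n k x" "k \<le> (k'::nat)"
      show "P n k' x"
      proof -
        have "from_nat_into (C n) ` {..k} \<subseteq> from_nat_into (C n) ` {..k'}" using \<open>k \<le> k'\<close> by auto
        then have "star (from_nat_into (C n) ` {..k}) (U n) \<subseteq> star (from_nat_into (C n) ` {..k'}) (U n)"
          by (rule star_mono)
        then show ?thesis using \<open>P n k x\<close> unfolding P_def by (rule subsetD)
      qed
    qed
    then obtain g where g: "\<forall>x\<in>topspace X. \<forall>\<^sub>F n in sequentially. P n (g n) x" by blast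
    show ?thesis
    proof (intro exI[of _ "\<lambda>n. from_nat_into (C n) ` {..g n}"] conjI allI)
      fix n show "finite (from_nat_into (C n) ` {..g n})" by simp
      show "from_nat_into (C n) ` {..g n} \<subseteq> D n"
        using from_nat_into[OF Cne[of n]] C[of n] by blast
    next
      show "\<forall>x\<in>topspace X. \<forall>\<^sub>F n in sequentially. x \<in> star (from_nat_into (C n) ` {..g n}) (U n)"
        using g unfolding P_def by simp
    qed
  qed
qed

lemma sigma_cd_choice:
  fixes X :: "'a topology"
  assumes A: "abs_star_sigma_cd X" and h: "open_cover X V \<and> dense_in X E"
  shows "\<exists>Cs :: nat \<Rightarrow> 'a set. (\<forall>k. closed_discrete X (Cs k)) \<and> (\<Union>k. Cs k) \<subseteq> E
            \<and> star (\<Union>k. Cs k) V = topspace X"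
proof -
  note A[unfolded abs_star_sigma_cd_def, rule_format, OF h]
  then obtain K where K: "K \<subseteq> E \<and> (\<exists>C :: nat \<Rightarrow> 'a set. (\<forall>k. closed_discrete X (C k)) \<and> K = (\<Union>k. C k))
             \<and> star K V = topspace X" by (rule exE)
  from K have K2: "\<exists>C :: nat \<Rightarrow> 'a set. (\<forall>k. closed_discrete X (C k)) \<and> K = (\<Union>k. C k)"
    by (rule conjunct1[OF conjunct2])
  from K2 obtain CC :: "nat \<Rightarrow> 'a set" where CC: "(\<forall>k. closed_discrete X (CC k)) \<and> K = (\<Union>k. CC k)"
    by (rule exE)
  show ?thesis
  proof (intro exI[of _ CC] conjI)
    show "\<forall>k. closed_discrete X (CC k)" using CC by (rule conjunct1)
    have eq: "K = (\<Union>k. CC k)" using CC by (rule conjunct2)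
    show "(\<Union>k. CC k) \<subseteq> E" using K unfolding eq by (rule conjunct1)
    show "star (\<Union>k. CC k) V = topspace X" using K unfolding eq by (rule conjunct2[OF conjunct2])
  qed
qed

lemma partB:
  fixes X :: "'a topology"
  assumes cb: "card_less_bounding (topspace X)" and A: "abs_star_sigma_cd X"
  shows "selSS_cd_O_Gamma X"
  unfolding selSS_cd_O_Gamma_def
proof (intro allI impI)
  fix U :: "nat \<Rightarrow> 'a set set" and D
  assume h: "\<forall>n. open_cover X (U n) \<and> dense_in X (D n)"
  have "\<forall>n. \<exists>Cs :: nat \<Rightarrow> 'a set. (\<forall>k. closed_discrete X (Cs k)) \<and> (\<Union>k. Cs k) \<subseteq> D n
            \<and> star (\<Union>k. Cs k) (U n) = topspace X"
  proof
    fix n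
    have "open_cover X (U n) \<and> dense_in X (D n)" using h by blast
    with A show "\<exists>Cs :: nat \<Rightarrow> 'a set. (\<forall>k. closed_discrete X (Cs k)) \<and> (\<Union>k. Cs k) \<subseteq> D n
            \<and> star (\<Union>k. Cs k) (U n) = topspace X" by (rule sigma_cd_choice)
  qed
  from choice[OF this] obtain Cs :: "nat \<Rightarrow> nat \<Rightarrow> 'a set" where Cs0: "\<forall>n. (\<forall>k. closed_discrete X (Cs n k)) \<and> (\<Union>k. Cs n k) \<subseteq> D n
            \<and> star (\<Union>k. Cs n k) (U n) = topspace X"
    by (rule exE)
  have Cs: "(\<forall>k. closed_discrete X (Cs n k)) \<and> (\<Union>k. Cs n k) \<subseteq> D n
            \<and> star (\<Union>k. Cs n k) (U n) = topspace X" for n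
    using Cs0 by (rule spec)
  define P where "P n k x = (x \<in> star (\<Union>j\<in>{..k}. Cs n j) (U n))" for n k x
  have "\<exists>g. \<forall>x\<in>topspace X. \<forall>\<^sub>F n in sequentially. P n (g n) x"
  proof (rule bounded_choice[OF cb])
    fix n x assume x: "x \<in> topspace X"
    have "star (\<Union>k. Cs n k) (U n) = topspace X" using Cs[of n] by blast
    with x have "x \<in> star (\<Union>k. Cs n k) (U n)" by simp
    then obtain V c k where V: "V \<in> U n" "x \<in> V" "c \<in> V" "c \<in> Cs n k" unfolding star_def by auto
    then have "c \<in> (\<Union>j\<in>{..k}. Cs n j)" by auto
    then have "V \<inter> (\<Union>j\<in>{..k}. Cs n j) \<noteq> {}" using V(3) by auto
    then have "x \<in> star (\<Union>j\<in>{..k}. Cs n j) (U n)"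
      unfolding star_def using V(1,2) by auto
    then show "\<exists>k. P n k x" unfolding P_def by (rule exI)
  next
    fix n x k k' assume "P n k x" "k \<le> (k'::nat)"
    show "P n k' x"
    proof -
      have "(\<Union>j\<in>{..k}. Cs n j) \<subseteq> (\<Union>j\<in>{..k'}. Cs n j)" using \<open>k \<le> k'\<close> by (intro UN_mono) auto
      then have "star (\<Union>j\<in>{..k}. Cs n j) (U n) \<subseteq> star (\<Union>j\<in>{..k'}. Cs n j) (U n)"
        by (rule star_mono)
      then show ?thesis using \<open>P n k x\<close> unfolding P_def by (rule subsetD)
    qed
  qed
  then obtain g where g: "\<forall>x\<in>topspace X. \<forall>\<^sub>F n in sequentially. P n (g n) x" by blast
  show "\<exists>C. (\<forall>n. C n \<subseteq> D n \<and> closed_discrete X (C n)) \<and>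
           (\<forall>x\<in>topspace X. \<forall>\<^sub>F n in sequentially. x \<in> star (C n) (U n))"
  proof (intro exI[of _ "\<lambda>n. \<Union>j\<in>{..g n}. Cs n j"] conjI allI)
    fix n
    show "(\<Union>j\<in>{..g n}. Cs n j) \<subseteq> D n" using Cs[of n] by blast
    have cd: "Cs n j \<subseteq> topspace X \<and> X derived_set_of (Cs n j) = {}" for j
    proof -
      have "closed_discrete X (Cs n j)" using Cs[of n] by blast
      then show ?thesis unfolding closed_discrete_iff .
    qed
    have "X derived_set_of (\<Union>j\<in>{..g n}. Cs n j) = (\<Union>S\<in>Cs n ` {..g n}. X derived_set_of S)"
      by (rule derived_set_of_Union) simp
    also have "\<dots> = {}" using cd by simp
    finally show "closed_discrete X (\<Union>j\<in>{..g n}. Cs n j)"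
      unfolding closed_discrete_iff using cd by auto
  next
    show "\<forall>x\<in>topspace X. \<forall>\<^sub>F n in sequentially. x \<in> star (\<Union>j\<in>{..g n}. Cs n j) (U n)"
      using g unfolding P_def by simp
  qed
qed

theorem mainTheorem5:
  fixes X :: "'a topology"
  assumes "regular_space X"
    and "card_less_bounding (topspace X)"
  shows "(abs_strongly_star_Lindelof X \<longrightarrow> sel_strongly_star_Hurewicz X) \<and>
         (abs_star_sigma_cd X \<longrightarrow> selSS_cd_O_Gamma X)"
  using partA partB assms(2) by blast

end
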